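(* Let $\bar x\in\Phi$ be a local second-order weak sharp minimizer of problem (P) with corresponding constants $\kappa>0$ and $\delta>0$. Then for any $\varepsilon\in[0,1/2)$, every $x\in S\cap B_\delta(\bar x)$, every $d\in C(x)\cap N^{P,\varepsilon}_S(x)$, and every $\lambda\in\mathbb{R}^m$ with $\nabla_x L(x,\lambda)=0$, one has (i) $\sigma_{\nabla g(x)(T''_\Phi(x;d))}(\lambda)\le 0$; (ii) $\nabla^2_{xx}L(x,\lambda)(d,d)-\sigma_{\nabla g(x)(T^2_\Phi(x;d))+\nabla^2 g(x)(d,d)}(\lambda)\ge 2\kappa(1-2\varepsilon)^2\|d\|^2$.
   Context: Standing setting: $f:\mathbb{R}^n\to\mathbb{R}$ and $g:\mathbb{R}^n\to\mathbb{R}^m$ are twice continuously differentiable, $K\subset\mathbb{R}^m$ is closed, and (P) is the problem $\min f(x)$ s.t. $g(x)\in K$. $\Phi:=\{x\in\mathbb{R}^n: g(x)\in K\}$ is the feasible set and $S$ is the (nonempty) set of optimal solutions of (P). $L(x,\lambda):=f(x)+\langle g(x),\lambda\rangle$. $B_\delta(x)$ is the ball of radius $\delta$ centered at $x$. A point $\bar x\in\Phi$ is a local second-order weak sharp minimizer of (P) with constants $\kappa,\delta>0$ if $f(x)\ge f(\bar x)+\kappa[\mathrm{dist}(x,S)]^2$ for all $x\in\Phi\cap B_\delta(\bar x)$. For a closed set $A$ and $\bar x\in A$: the tangent cone is $T_A(\bar x):=\{d:\exists t_k\downarrow0,d_k\to d,\ \bar x+t_kd_k\in A\}$; the outer second-order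 tangent set in direction $d\in T_A(\bar x)$ is $T^2_A(\bar x;d):=\{w:\exists t_k\downarrow0,w_k\to w,\ \bar x+t_kd+\tfrac12t_k^2w_k\in A\}$; the asymptotic second-order tangent cone is $T''_A(\bar x;d):=\{w:\exists (t_k,r_k)\downarrow(0,0)\text{ with } t_k/r_k\to0,\ w_k\to w,\ \bar x+t_kd+\tfrac12t_kr_kw_k\in A\}$. The critical cone at a feasible $x$ is $C(x):=\{d:\nabla g(x)d\in T_K(g(x)),\ \nabla f(x)d\le0\}$. The proximal normal cone is $N^P_A(\bar x):=\{v:\exists\tau>0 \text{ such that } \bar x \text{ is a nearest point of } A \text{ to } \bar x+\tau v\}$, and for $\varepsilon\ge0$ the $\varepsilon$-proximal normal cone is $N^{P,\varepsilon}_A(\bar x):=\{v:\mathrm{dist}(v,N^P_A(\bar x))\le\varepsilon\|v\|\}$. $\sigma_A(\lambda):=\sup_{u\in A}\langle\lambda,u\rangle$ (equal to $-\infty$ if $A=\emptyset$). $\nabla g(x)\in\mathbb{R}^{m\times n}$ is the Jacobian, $\nabla^2g(x)(d,d):=(d^T\nabla^2g_1(x)d,\dots,d^T\nabla^2g_m(x)d)$, and for a set $A\subset\mathbb{R}^n$, $\nabla g(x)(A):=\{\nabla g(x)u:u\in A\}$. *)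

theory Defs
  imports "HOL-Analysis.Analysis"
begin

definition tangent_cone :: "('a::real_normed_vector) set \<Rightarrow> 'a \<Rightarrow> 'a set" where
  "tangent_cone A x = {d. \<exists>t dk. (\<forall>k. t k > 0) \<and> t \<longlonglongrightarrow> 0 \<and> dk \<longlonglongrightarrow> d \<and>
      (\<forall>k. x + t k *\<^sub>R dk k \<in> A)}"

definition second_order_tangent_set :: "('a::real_normed_vector) set \<Rightarrow> 'a \<Rightarrow> 'a \<Rightarrow> 'a set" where
  "second_order_tangent_set A x d = {w. \<exists>t wk. (\<forall>k. t k > 0) \<and> t \<longlonglongrightarrow> 0 \<and> wk \<longlonglongrightarrow> w \<and>
      (\<forall>k. x + t k *\<^sub>R d + (1/2 * (t k)\<^sup>2) *\<^sub>R wk k \<in> A)}"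

definition asymptotic_second_order_tangent_cone :: "('a::real_normed_vector) set \<Rightarrow> 'a \<Rightarrow> 'a \<Rightarrow> 'a set" where
  "asymptotic_second_order_tangent_cone A x d = {w. \<exists>t r wk.
      (\<forall>k. t k > 0) \<and> (\<forall>k. r k > 0) \<and> t \<longlonglongrightarrow> 0 \<and> r \<longlonglongrightarrow> 0 \<and>
      (\<lambda>k. t k / r k) \<longlonglongrightarrow> 0 \<and> wk \<longlonglongrightarrow> w \<and>
      (\<forall>k. x + t k *\<^sub>R d + (1/2 * t k * r k) *\<^sub>R wk k \<in> A)}"

definition proximal_normal_cone :: "('a::real_normed_vector) set \<Rightarrow> 'a \<Rightarrow> 'a set" where
  "proximal_normal_cone A x = {v. \<exists>\<tau>>0. x \<in> A \<and> (\<forall>a\<in>A. dist (x + \<tau> *\<^sub>R v) x \<le> dist (x + \<tau> *\<^sub>R v) a)}"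

definition eps_proximal_normal_cone :: "real \<Rightarrow> ('a::real_normed_vector) set \<Rightarrow> 'a \<Rightarrow> 'a set" where
  "eps_proximal_normal_cone \<epsilon> A x = {v. proximal_normal_cone A x \<noteq> {} \<and>
      infdist v (proximal_normal_cone A x) \<le> \<epsilon> * norm v}"

text \<open>Support function (value -\<infinity> on the empty set, possibly +\<infinity>).\<close>
definition support_fun :: "('a::real_inner) set \<Rightarrow> 'a \<Rightarrow> ereal" where
  "support_fun A l = (SUP u\<in>A. ereal (l \<bullet> u))"

definition feasible_set :: "('n \<Rightarrow> 'm) \<Rightarrow> 'm set \<Rightarrow> 'n set" where
  "feasible_set g K = {x. g x \<in> K}"

definition solution_set :: "('n \<Rightarrow> real) \<Rightarrow> ('n \<Rightarrow> 'm) \<Rightarrow> 'm set \<Rightarrow> 'n set" where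
  "solution_set f g K = {x \<in> feasible_set g K. \<forall>y \<in> feasible_set g K. f x \<le> f y}"

definition local_second_order_weak_sharp_min ::
  "('n::real_normed_vector \<Rightarrow> real) \<Rightarrow> ('n \<Rightarrow> 'm) \<Rightarrow> 'm set \<Rightarrow> 'n \<Rightarrow> real \<Rightarrow> real \<Rightarrow> bool" where
  "local_second_order_weak_sharp_min f g K xb \<kappa> \<delta> \<longleftrightarrow>
     xb \<in> feasible_set g K \<and> \<kappa> > 0 \<and> \<delta> > 0 \<and>
     (\<forall>x \<in> feasible_set g K \<inter> ball xb \<delta>.
        f x \<ge> f xb + \<kappa> * (infdist x (solution_set f g K))\<^sup>2)"

definition critical_cone ::
  "(real^'n \<Rightarrow> real^'n) \<Rightarrow> (real^'n \<Rightarrow> real^'n^'m) \<Rightarrow> (real^'n \<Rightarrow> real^'m) \<Rightarrow> (real^'m) set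
     \<Rightarrow> real^'n \<Rightarrow> (real^'n) set" where
  "critical_cone gf J g K x = {d. J x *v d \<in> tangent_cone K (g x) \<and> gf x \<bullet> d \<le> 0}"

end

theory Submission imports Defs begin

lemma taylor2:
  fixes f :: "real^'n \<Rightarrow> real" and gf :: "real^'n \<Rightarrow> real^'n" and Hf :: "real^'n \<Rightarrow> real^'n^'n"
  assumes f_deriv: "\<And>y. (f has_derivative (\<lambda>h. gf y \<bullet> h)) (at y)"
    and gfx: "(gf has_derivative (\<lambda>h. Hf x *v h)) (at x)"
    and e: "e > 0"
  shows "\<exists>r>0. \<forall>h. norm h < r \<longrightarrow> \<bar>f (x+h) - f x - gf x \<bullet> h - 1/2 * (h \<bullet> (Hf x *v h))\<bar> \<le> e * (norm h)\<^sup>2"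
proof -
  from gfx e obtain r where r: "r>0" "\<forall>y. norm (y - x) < r \<longrightarrow> norm (gf y - gf x - Hf x *v (y - x)) \<le> e * norm (y - x)"
    unfolding has_derivative_at_alt by blast
  show ?thesis
  proof (intro exI[of _ r] conjI allI impI)
    show "r > 0" by fact
    fix h :: "real^'n" assume h: "norm h < r"
    define \<psi> where "\<psi> s = f (x + s *\<^sub>R h) - s * (gf x \<bullet> h) - s^2/2 * (h \<bullet> (Hf x *v h))" for s
    define \<psi>' where "\<psi>' s = (gf (x + s *\<^sub>R h) - gf x - Hf x *v (s *\<^sub>R h)) \<bullet> h" for s
    have der: "DERIV \<psi> s :> \<psi>' s" for s
    proof -
      have "((\<lambda>s. x + s *\<^sub>R h) has_derivative (\<lambda>t. t *\<^sub>R h)) (at s)"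
        by (auto intro!: derivative_eq_intros)
      from has_derivative_compose[OF this f_deriv]
      have "((\<lambda>s. f (x + s *\<^sub>R h)) has_derivative (\<lambda>t. gf (x + s *\<^sub>R h) \<bullet> (t *\<^sub>R h))) (at s)"
        by (simp add: o_def)
      then have d1: "((\<lambda>s. f (x + s *\<^sub>R h)) has_real_derivative gf (x + s *\<^sub>R h) \<bullet> h) (at s)"
        unfolding has_field_derivative_def
        by (rule has_derivative_eq_rhs) (auto simp: fun_eq_iff)
      have "DERIV \<psi> s :> gf (x + s *\<^sub>R h) \<bullet> h - gf x \<bullet> h - (2 * s / 2) * (h \<bullet> (Hf x *v h))"
        unfolding \<psi>_def
        by (auto intro!: derivative_eq_intros d1)
      moreover have "gf (x + s *\<^sub>R h) \<bullet> h - gf x \<bullet> h - (2 * s / 2) * (h \<bullet> (Hf x *v h)) = \<psi>' s"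
        unfolding \<psi>'_def by (simp add: inner_diff_left inner_diff_right matrix_vector_mult_scaleR inner_commute)
      ultimately show ?thesis by simp
    qed
    obtain z where z: "0<z" "z<1" "\<psi> 1 - \<psi> 0 = (1 - 0) * \<psi>' z"
      using MVT2[of 0 1 \<psi> \<psi>'] der by auto
    have "\<bar>\<psi>' z\<bar> \<le> norm (gf (x + z *\<^sub>R h) - gf x - Hf x *v (z *\<^sub>R h)) * norm h"
      unfolding \<psi>'_def by (rule Cauchy_Schwarz_ineq2)
    also have "\<dots> \<le> (e * norm (z *\<^sub>R h)) * norm h"
      using r(2)[rule_format, of "x + z *\<^sub>R h"] h z mult_left_le_one_le[of "norm h" z] by (intro mult_right_mono) auto
    also have "\<dots> \<le> e * (norm h)\<^sup>2"
      using z e mult_left_le_one_le[of "norm h * norm h" z] by (simp add: power2_eq_square)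
    finally have "\<bar>\<psi>' z\<bar> \<le> e * (norm h)\<^sup>2" .
    moreover have "\<psi> 1 - \<psi> 0 = f (x+h) - f x - gf x \<bullet> h - 1/2 * (h \<bullet> (Hf x *v h))"
      unfolding \<psi>_def by simp
    ultimately show "\<bar>f (x+h) - f x - gf x \<bullet> h - 1/2 * (h \<bullet> (Hf x *v h))\<bar> \<le> e * (norm h)\<^sup>2"
      using z by simp
  qed
qed

lemma seq_taylor:
  fixes f :: "real^'n \<Rightarrow> real" and gf :: "real^'n \<Rightarrow> real^'n" and Hf :: "real^'n \<Rightarrow> real^'n^'n"
  assumes f_deriv: "\<And>y. (f has_derivative (\<lambda>h. gf y \<bullet> h)) (at y)"
    and gfx: "(gf has_derivative (\<lambda>h. Hf x *v h)) (at x)"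
    and tpos: "\<And>k. t k > 0" and t0: "t \<longlonglongrightarrow> 0" and u: "u \<longlonglongrightarrow> u0"
  shows "(\<lambda>k. (f (x + t k *\<^sub>R u k) - f x - t k * (gf x \<bullet> u k)) / (t k)\<^sup>2)
           \<longlonglongrightarrow> 1/2 * (u0 \<bullet> (Hf x *v u0))"
proof -
  define R where "R k = (f (x + t k *\<^sub>R u k) - f x - gf x \<bullet> (t k *\<^sub>R u k)
      - 1/2 * ((t k *\<^sub>R u k) \<bullet> (Hf x *v (t k *\<^sub>R u k)))) / (t k)\<^sup>2" for k
  have eq: "(f (x + t k *\<^sub>R u k) - f x - t k * (gf x \<bullet> u k)) / (t k)\<^sup>2
      = R k + 1/2 * (u k \<bullet> (Hf x *v u k))" for k
    using tpos[of k] unfolding R_def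
    by (simp add: matrix_vector_mult_scaleR field_simps power2_eq_square)
  define B where "B = norm u0 + 1"
  have B: "B > 0" unfolding B_def by (simp add: add_nonneg_pos)
  have evB: "eventually (\<lambda>k. norm (u k) < B) sequentially"
    unfolding B_def by (rule order_tendstoD(2)[OF tendsto_norm[OF u]]) simp
  have R0: "R \<longlonglongrightarrow> 0"
  proof (rule LIMSEQ_I)
    fix e :: real assume e: "e > 0"
    obtain r where r: "r > 0" "\<forall>h. norm h < r \<longrightarrow> \<bar>f (x+h) - f x - gf x \<bullet> h - 1/2 * (h \<bullet> (Hf x *v h))\<bar> \<le> (e / (2 * B\<^sup>2)) * (norm h)\<^sup>2"
      using taylor2[where f=f and gf=gf and Hf=Hf and x=x and e="e / (2 * B\<^sup>2)", OF f_deriv gfx] e B by auto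
    have evt: "eventually (\<lambda>k. t k < r / B) sequentially"
      by (rule order_tendstoD(2)[OF t0]) (use r B in simp)
    from eventually_conj[OF evB evt] obtain N where N: "\<And>k. k \<ge> N \<Longrightarrow> norm (u k) < B \<and> t k < r / B"
      unfolding eventually_sequentially by blast
    show "\<exists>N. \<forall>k\<ge>N. norm (R k - 0) < e"
    proof (intro exI allI impI)
      fix k assume k: "k \<ge> N"
      have tk: "t k > 0" by (rule tpos)
      have nu: "norm (t k *\<^sub>R u k) = t k * norm (u k)" using tk by simp
      have lt: "t k * norm (u k) < r"
      proof -
        have "t k * norm (u k) \<le> t k * B" using N[OF k] tk by (intro mult_left_mono) auto
        also have "\<dots> < r" using N[OF k] B by (simp add: pos_less_divide_eq)
        finally show ?thesis .
      qed
      have "\<bar>R k\<bar> = \<bar>f (x + t k *\<^sub>R u k) - f x - gf x \<bullet> (t k *\<^sub>R u k)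
           - 1/2 * ((t k *\<^sub>R u k) \<bullet> (Hf x *v (t k *\<^sub>R u k))) \<bar> / (t k)\<^sup>2"
        unfolding R_def by (simp add: abs_divide)
      also have "\<dots> \<le> ((e / (2 * B\<^sup>2)) * (t k * norm (u k))\<^sup>2) / (t k)\<^sup>2"
        using r(2)[rule_format, of "t k *\<^sub>R u k"] lt nu tk by (intro divide_right_mono) auto
      also have "\<dots> = (e / (2 * B\<^sup>2)) * (norm (u k))\<^sup>2"
        using tk by (simp add: power_mult_distrib)
      also have "\<dots> \<le> (e / (2 * B\<^sup>2)) * B\<^sup>2"
        using N[OF k] e B by (intro mult_left_mono power_mono) auto
      also have "\<dots> < e" using e B by simp
      finally show "norm (R k - 0) < e" by simp
    qed
  qed
  have "(\<lambda>k. R k + 1/2 * (u k \<bullet> (Hf x *v u k))) \<longlonglongrightarrow> 0 + 1/2 * (u0 \<bullet> (Hf x *v u0))"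
    by (intro tendsto_intros R0 u bounded_linear.tendsto[OF matrix_vector_mul_bounded_linear])
  then show ?thesis unfolding eq by simp
qed

theorem theorem3p2:
  fixes f :: "real^'n \<Rightarrow> real" and g :: "real^'n \<Rightarrow> real^'m"
    and gf :: "real^'n \<Rightarrow> real^'n" and Hf :: "real^'n \<Rightarrow> real^'n^'n"
    and Jg :: "real^'n \<Rightarrow> real^'n^'m" and Hg :: "real^'n \<Rightarrow> (real^'n^'n)^'m"
    and K :: "(real^'m) set" and xb :: "real^'n" and \<kappa> \<delta> \<epsilon> :: real
    and x d :: "real^'n" and l :: "real^'m"
  assumes f_deriv: "\<And>y. (f has_derivative (\<lambda>h. gf y \<bullet> h)) (at y)"
    and gf_deriv: "\<And>y. (gf has_derivative (\<lambda>h. Hf y *v h)) (at y)"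
    and Hf_cont: "continuous_on UNIV Hf"
    and g_deriv: "\<And>y. (g has_derivative (\<lambda>h. Jg y *v h)) (at y)"
    and Jg_deriv: "\<And>y i. ((\<lambda>z. Jg z $ i) has_derivative (\<lambda>h. Hg y $ i *v h)) (at y)"
    and Hg_cont: "continuous_on UNIV Hg"
    and K_closed: "closed K"
    and S_nonempty: "solution_set f g K \<noteq> {}"
    and wsm: "local_second_order_weak_sharp_min f g K xb \<kappa> \<delta>"
    and eps: "0 \<le> \<epsilon>" "\<epsilon> < 1/2"
    and x_in: "x \<in> solution_set f g K \<inter> ball xb \<delta>"
    and d_in: "d \<in> critical_cone gf Jg g K x \<inter> eps_proximal_normal_cone \<epsilon> (solution_set f g K) x"
    and lagr: "gf x + l v* Jg x = 0"
  shows "(support_fun ((\<lambda>u. Jg x *v u) ` asymptotic_second_order_tangent_cone (feasible_set g K) x d) l \<le> 0) \<and>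
         (ereal (d \<bullet> (Hf x *v d) + (\<Sum>i\<in>UNIV. l $ i * (d \<bullet> (Hg x $ i *v d))))
           - support_fun ((\<lambda>u. Jg x *v u + (\<chi> i. d \<bullet> (Hg x $ i *v d)))
                            ` second_order_tangent_set (feasible_set g K) x d) l
         \<ge> ereal (2 * \<kappa> * (1 - 2 * \<epsilon>)\<^sup>2 * (norm d)\<^sup>2))"
proof -
  let ?Phi = "feasible_set g K"
  let ?S = "solution_set f g K"
  have xS: "x \<in> ?S" and xball: "x \<in> ball xb \<delta>" using x_in by auto
  have xPhi: "x \<in> ?Phi" and xopt: "\<And>y. y \<in> ?Phi \<Longrightarrow> f x \<le> f y"
    using xS unfolding solution_set_def by auto
  have gfd: "gf x \<bullet> d \<le> 0" and dN: "d \<in> eps_proximal_normal_cone \<epsilon> ?S x"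
    using d_in unfolding critical_cone_def by auto
  have lJv: "l v* Jg x = - gf x" using lagr by (simp add: eq_neg_iff_add_eq_0 add.commute)
  have lJ: "l \<bullet> (Jg x *v w) = - (gf x \<bullet> w)" for w
    by (simp add: dot_lmul_matrix[symmetric] lJv)
  have gfx: "(gf has_derivative (\<lambda>h. Hf x *v h)) (at x)" by (rule gf_deriv)
  define Q where "Q t u = (f (x + t *\<^sub>R u) - f x - t * (gf x \<bullet> u)) / t\<^sup>2" for t u
  have Qlim: "(\<lambda>k. Q (t k) (u k)) \<longlonglongrightarrow> 1/2 * (u0 \<bullet> (Hf x *v u0))"
    if "\<And>k. t k > 0" "t \<longlonglongrightarrow> 0" "u \<longlonglongrightarrow> u0" for t u u0
    unfolding Q_def by (rule seq_taylor[where f=f and gf=gf and Hf=Hf, OF f_deriv gfx that])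
  have fQ: "f (x + t *\<^sub>R u) - f x = t * (gf x \<bullet> u) + t\<^sup>2 * Q t u" if "t > 0" for t u
    using that unfolding Q_def by (simp add: field_simps)
  have first: "gf x \<bullet> d = 0"
    if tpos: "\<And>k. t k > 0" and t0: "t \<longlonglongrightarrow> 0" and u: "u \<longlonglongrightarrow> d"
      and feas: "\<And>k. x + t k *\<^sub>R u k \<in> ?Phi" for t u
  proof -
    have "(\<lambda>k. gf x \<bullet> u k + t k * Q (t k) (u k)) \<longlonglongrightarrow> gf x \<bullet> d + 0 * (1/2 * (d \<bullet> (Hf x *v d)))"
      by (intro tendsto_intros u t0 Qlim[OF tpos t0 u])
    moreover have "gf x \<bullet> u k + t k * Q (t k) (u k) \<ge> 0" for k
    proof -
      have "0 \<le> f (x + t k *\<^sub>R u k) - f x" using xopt[OF feas[of k]] by simp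
      also have "\<dots> = t k * (gf x \<bullet> u k + t k * Q (t k) (u k))"
        using fQ[OF tpos[of k]] by (simp add: power2_eq_square algebra_simps)
      finally show ?thesis using tpos[of k] by (simp add: zero_le_mult_iff)
    qed
    ultimately have "gf x \<bullet> d \<ge> 0"
      by (intro tendsto_lowerbound[where F=sequentially]) auto
    with gfd show "gf x \<bullet> d = 0" by simp
  qed
  have part1: "gf x \<bullet> w \<ge> 0" if w: "w \<in> asymptotic_second_order_tangent_cone ?Phi x d" for w
  proof -
    from w obtain t r wk where tpos: "\<forall>k. t k > 0" and rpos: "\<forall>k. r k > 0"
      and t0: "t \<longlonglongrightarrow> 0" and r0: "r \<longlonglongrightarrow> 0" and tr: "(\<lambda>k. t k / r k) \<longlonglongrightarrow> 0"
      and wk: "wk \<longlonglongrightarrow> w"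
      and feas: "\<forall>k. x + t k *\<^sub>R d + (1/2 * t k * r k) *\<^sub>R wk k \<in> ?Phi"
      unfolding asymptotic_second_order_tangent_cone_def by blast
    define u where "u k = d + (1/2 * r k) *\<^sub>R wk k" for k
    have xu: "x + t k *\<^sub>R d + (1/2 * t k * r k) *\<^sub>R wk k = x + t k *\<^sub>R u k" for k
      unfolding u_def by (simp add: algebra_simps)
    have u: "u \<longlonglongrightarrow> d"
      using tendsto_add[OF tendsto_const tendsto_scaleR[OF tendsto_mult[OF tendsto_const r0] wk], of d "1/2"]
      unfolding u_def by simp
    have feas': "x + t k *\<^sub>R u k \<in> ?Phi" for k using feas xu by metis
    have gd0: "gf x \<bullet> d = 0" by (rule first[OF _ t0 u feas']) (use tpos in auto)
    have lim: "(\<lambda>k. 1/2 * (gf x \<bullet> wk k) + (t k / r k) * Q (t k) (u k))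
        \<longlonglongrightarrow> 1/2*(gf x \<bullet> w) + 0 * (1/2 * (d \<bullet> (Hf x *v d)))"
      by (intro tendsto_intros wk tr Qlim u t0) (use tpos in auto)
    have ge: "1/2 * (gf x \<bullet> wk k) + (t k / r k) * Q (t k) (u k) \<ge> 0" for k
    proof -
      have tk: "t k > 0" and rk: "r k > 0" using tpos rpos by auto
      have gu: "gf x \<bullet> u k = 1/2 * r k * (gf x \<bullet> wk k)"
        unfolding u_def using gd0 by (simp add: inner_add_right)
      have "0 \<le> f (x + t k *\<^sub>R u k) - f x" using xopt[OF feas'[of k]] by simp
      also have "\<dots> = t k * (gf x \<bullet> u k) + (t k)\<^sup>2 * Q (t k) (u k)" using fQ tk by auto
      also have "\<dots> = (t k * r k) * (1/2 * (gf x \<bullet> wk k) + (t k / r k) * Q (t k) (u k))"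
        using rk unfolding gu by (simp add: field_simps power2_eq_square)
      finally have h: "0 \<le> (t k * r k) * (1/2 * (gf x \<bullet> wk k) + (t k / r k) * Q (t k) (u k))" .
      have "t k * r k > 0" using tk rk by simp
      with h show ?thesis by (metis not_less zero_le_mult_iff)
    qed
    have "1/2*(gf x \<bullet> w) + 0 * (1/2 * (d \<bullet> (Hf x *v d))) \<ge> 0"
      by (rule tendsto_lowerbound[OF lim]) (use ge in auto)
    then show ?thesis by simp
  qed
  have fxb: "f x = f xb"
  proof -
    have "xb \<in> ?Phi" using wsm unfolding local_second_order_weak_sharp_min_def by auto
    then have "f x \<le> f xb" by (rule xopt)
    moreover have "f x \<ge> f xb + \<kappa> * (infdist x ?S)\<^sup>2"
      using wsm xPhi xball unfolding local_second_order_weak_sharp_min_def by auto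
    ultimately show ?thesis using xS by simp
  qed
  have wsm': "f y \<ge> f x + \<kappa> * (infdist y ?S)\<^sup>2" if "y \<in> ?Phi" "y \<in> ball xb \<delta>" for y
    using wsm that fxb unfolding local_second_order_weak_sharp_min_def by auto
  have kpos: "\<kappa> > 0" using wsm unfolding local_second_order_weak_sharp_min_def by auto
  have part2: "gf x \<bullet> w + d \<bullet> (Hf x *v d) \<ge> 2 * \<kappa> * (1 - 2*\<epsilon>)\<^sup>2 * (norm d)\<^sup>2"
    if w: "w \<in> second_order_tangent_set ?Phi x d" for w
  proof -
    from w obtain t wk where tpos: "\<forall>k. t k > 0" and t0: "t \<longlonglongrightarrow> 0"
      and wk: "wk \<longlonglongrightarrow> w"
      and feas: "\<forall>k. x + t k *\<^sub>R d + (1/2 * (t k)\<^sup>2) *\<^sub>R wk k \<in> ?Phi"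
      unfolding second_order_tangent_set_def by blast
    define u where "u k = d + (1/2 * t k) *\<^sub>R wk k" for k
    have xu: "x + t k *\<^sub>R d + (1/2 * (t k)\<^sup>2) *\<^sub>R wk k = x + t k *\<^sub>R u k" for k
      unfolding u_def by (simp add: algebra_simps power2_eq_square)
    have u: "u \<longlonglongrightarrow> d"
      using tendsto_add[OF tendsto_const tendsto_scaleR[OF tendsto_mult[OF tendsto_const t0] wk], of d "1/2"]
      unfolding u_def by simp
    have feas': "x + t k *\<^sub>R u k \<in> ?Phi" for k using feas xu by metis
    have gd0: "gf x \<bullet> d = 0" by (rule first[OF _ t0 u feas']) (use tpos in auto)
    define A where "A = gf x \<bullet> w + d \<bullet> (Hf x *v d)"
    have qlim: "(\<lambda>k. (f (x + t k *\<^sub>R u k) - f x) / (t k)\<^sup>2) \<longlonglongrightarrow> A/2"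
    proof -
      have "(\<lambda>k. 1/2 * (gf x \<bullet> wk k) + Q (t k) (u k)) \<longlonglongrightarrow> 1/2*(gf x \<bullet> w) + 1/2 * (d \<bullet> (Hf x *v d))"
        by (intro tendsto_intros wk Qlim u t0) (use tpos in auto)
      moreover have "(f (x + t k *\<^sub>R u k) - f x) / (t k)\<^sup>2 = 1/2 * (gf x \<bullet> wk k) + Q (t k) (u k)" for k
      proof -
        have tk: "t k > 0" using tpos by auto
        have gu: "gf x \<bullet> u k = 1/2 * t k * (gf x \<bullet> wk k)"
          unfolding u_def using gd0 by (simp add: inner_add_right)
        show ?thesis using fQ[OF tk, of "u k"] tk unfolding gu by (simp add: field_simps power2_eq_square)
      qed
      ultimately show ?thesis unfolding A_def by (simp add: add_divide_distrib)
    qed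
    have hlim: "(\<lambda>k. t k *\<^sub>R u k) \<longlonglongrightarrow> 0"
      using tendsto_scaleR[OF t0 u] by simp
    have evball: "eventually (\<lambda>k. x + t k *\<^sub>R u k \<in> ball xb \<delta>) sequentially"
    proof -
      have "eventually (\<lambda>k. norm (t k *\<^sub>R u k) < \<delta> - dist xb x) sequentially"
        using xball by (intro order_tendstoD(2)[OF tendsto_norm_zero[OF hlim]]) (simp add: dist_commute)
      then show ?thesis
      proof (rule eventually_mono)
        fix k assume "norm (t k *\<^sub>R u k) < \<delta> - dist xb x"
        moreover have "dist xb (x + t k *\<^sub>R u k) \<le> dist xb x + norm (t k *\<^sub>R u k)"
          using dist_triangle[of xb "x + t k *\<^sub>R u k" x] by (simp add: dist_norm)
        ultimately show "x + t k *\<^sub>R u k \<in> ball xb \<delta>" by simp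
      qed
    qed
    have Apos: "A \<ge> 0"
    proof -
      have "0 \<le> A/2"
        by (rule tendsto_lowerbound[OF qlim])
          (use xopt[OF feas'] tpos in \<open>auto intro!: always_eventually divide_nonneg_pos\<close>)
      then show ?thesis by simp
    qed
    have key: "A \<ge> 2 * \<kappa> * (max 0 ((v \<bullet> d) / norm v))\<^sup>2"
      if v: "v \<in> proximal_normal_cone ?S x" for v
    proof -
      obtain \<tau> where tau: "\<tau> > 0" "\<forall>a\<in>?S. dist (x + \<tau> *\<^sub>R v) x \<le> dist (x + \<tau> *\<^sub>R v) a"
        using v unfolding proximal_normal_cone_def by blast
      have prox: "2 * \<tau> * (v \<bullet> (s - x)) \<le> (norm (s - x))\<^sup>2" if s: "s \<in> ?S" for s
      proof -
        have "norm (\<tau> *\<^sub>R v) \<le> norm (\<tau> *\<^sub>R v - (s - x))"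
          using tau(2)[rule_format, OF s] by (simp add: dist_norm algebra_simps)
        then have "(norm (\<tau> *\<^sub>R v))\<^sup>2 \<le> (norm (\<tau> *\<^sub>R v - (s - x)))\<^sup>2"
          by (simp add: power_mono)
        then have "(\<tau> *\<^sub>R v) \<bullet> (\<tau> *\<^sub>R v) \<le> (\<tau> *\<^sub>R v - (s - x)) \<bullet> (\<tau> *\<^sub>R v - (s - x))"
          by (simp only: power2_norm_eq_inner)
        then show ?thesis unfolding power2_norm_eq_inner
          by (simp add: inner_diff_left inner_diff_right inner_commute algebra_simps)
      qed
      define a where "a k = (if v = 0 then 0 else (v \<bullet> u k - 2 * t k * (norm (u k))\<^sup>2 / \<tau>) / norm v)" for k
      have Dlow: "max 0 (a k) \<le> infdist (x + t k *\<^sub>R u k) ?S / t k" for k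
      proof -
        have tk: "t k > 0" using tpos by auto
        have D0: "0 \<le> infdist (x + t k *\<^sub>R u k) ?S / t k"
          using tk by (simp add: infdist_nonneg)
        have "a k \<le> infdist (x + t k *\<^sub>R u k) ?S / t k"
        proof (cases "v = 0")
          case True then show ?thesis using D0 by (simp add: a_def)
        next
          case False
          define h where "h = t k *\<^sub>R u k"
          have nh: "norm h = t k * norm (u k)" unfolding h_def using tk by simp
          have vh: "v \<bullet> h = t k * (v \<bullet> u k)" unfolding h_def by simp
          define B where "B = t k * (v \<bullet> u k) - 2 * (t k)\<^sup>2 * (norm (u k))\<^sup>2 / \<tau>"
          have Bs: "B \<le> norm v * dist (x + h) s" if s: "s \<in> ?S" for s
          proof (cases "norm (s - x) \<le> 2 * norm h")
            case True
            have "v \<bullet> (x + h - s) \<le> norm v * dist (x + h) s"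
              by (simp add: dist_norm norm_cauchy_schwarz)
            moreover have "v \<bullet> (x + h - s) = v \<bullet> h - v \<bullet> (s - x)" by (simp add: algebra_simps)
            moreover have "v \<bullet> (s - x) \<le> (norm (s - x))\<^sup>2 / (2 * \<tau>)"
              using prox[OF s] tau(1) by (simp add: pos_le_divide_eq mult.commute mult.left_commute)
            moreover have "(norm (s - x))\<^sup>2 \<le> (2 * norm h)\<^sup>2"
              using True by (intro power_mono) auto
            moreover have "(2 * norm h)\<^sup>2 / (2 * \<tau>) = 2 * (t k)\<^sup>2 * (norm (u k))\<^sup>2 / \<tau>"
              unfolding nh using tau(1) by (simp add: field_simps power2_eq_square)
            ultimately have "v \<bullet> h - (2 * norm h)\<^sup>2 / (2 * \<tau>) \<le> norm v * dist (x + h) s"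
              using divide_right_mono[of "(norm (s - x))\<^sup>2" "(2 * norm h)\<^sup>2" "2 * \<tau>"] tau(1) by linarith
            then show ?thesis unfolding B_def vh
              using \<open>(2 * norm h)\<^sup>2 / (2 * \<tau>) = 2 * (t k)\<^sup>2 * (norm (u k))\<^sup>2 / \<tau>\<close> by linarith
          next
            case False
            have "dist (x + h) s = norm (h - (s - x))" by (simp add: dist_norm algebra_simps)
            also have "\<dots> \<ge> norm (s - x) - norm h" using norm_triangle_ineq2[of "s - x" h]
              by (simp add: norm_minus_commute)
            finally have "dist (x + h) s \<ge> norm h" using False by linarith
            then have "norm v * norm h \<le> norm v * dist (x + h) s" by (simp add: mult_left_mono)
            moreover have "v \<bullet> h \<le> norm v * norm h" by (rule norm_cauchy_schwarz)
            moreover have "0 \<le> 2 * (t k)\<^sup>2 * (norm (u k))\<^sup>2 / \<tau>" using tau(1) by simp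
            ultimately show ?thesis unfolding B_def vh by linarith
          qed
          have "B / norm v \<le> infdist (x + h) ?S"
            unfolding infdist_notempty[OF S_nonempty]
            using Bs False by (intro cINF_greatest S_nonempty) (simp add: pos_divide_le_eq mult.commute)
          moreover have "a k = (B / norm v) / t k"
            unfolding a_def B_def using False tk by (simp add: field_simps power2_eq_square)
          ultimately show ?thesis unfolding h_def using tk divide_right_mono[of "B / norm v" _ "t k"] by simp
        qed
        then show ?thesis using D0 by simp
      qed
      define a0 where "a0 = (if v = 0 then 0 else (v \<bullet> d - 2 * 0 * (norm d)\<^sup>2 / \<tau>) / norm v)"
      have alim: "a \<longlonglongrightarrow> a0"
      proof (cases "v = 0")
        case True then show ?thesis unfolding a_def a0_def by simp
      next
        case False
        have "(\<lambda>k. (v \<bullet> u k - 2 * t k * (norm (u k))\<^sup>2 / \<tau>) / norm v)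
            \<longlonglongrightarrow> (v \<bullet> d - 2 * 0 * (norm d)\<^sup>2 / \<tau>) / norm v"
          using False tau(1) by (intro tendsto_intros u t0) auto
        then show ?thesis unfolding a_def a0_def using False by simp
      qed
      have a0eq: "a0 = (v \<bullet> d) / norm v" unfolding a0_def by simp
      have "(\<lambda>k. \<kappa> * (max 0 (a k))\<^sup>2) \<longlonglongrightarrow> \<kappa> * (max 0 a0)\<^sup>2"
        by (intro tendsto_intros alim)
      moreover have "eventually (\<lambda>k. \<kappa> * (max 0 (a k))\<^sup>2 \<le> (f (x + t k *\<^sub>R u k) - f x) / (t k)\<^sup>2) sequentially"
        using evball
      proof (rule eventually_mono)
        fix k assume kb: "x + t k *\<^sub>R u k \<in> ball xb \<delta>"
        have tk: "t k > 0" using tpos by auto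
        let ?D = "infdist (x + t k *\<^sub>R u k) ?S"
        have "(max 0 (a k))\<^sup>2 \<le> (?D / t k)\<^sup>2"
          using Dlow[of k] by (intro power_mono) auto
        then have "\<kappa> * (max 0 (a k))\<^sup>2 \<le> \<kappa> * ?D\<^sup>2 / (t k)\<^sup>2"
          using kpos mult_left_mono[of "(max 0 (a k))\<^sup>2" "?D\<^sup>2 / (t k)\<^sup>2" \<kappa>] by (simp add: power_divide)
        also have "\<dots> \<le> (f (x + t k *\<^sub>R u k) - f x) / (t k)\<^sup>2"
          using wsm'[OF feas' kb] tk by (intro divide_right_mono) auto
        finally show "\<kappa> * (max 0 (a k))\<^sup>2 \<le> (f (x + t k *\<^sub>R u k) - f x) / (t k)\<^sup>2" .
      qed
      ultimately have "\<kappa> * (max 0 a0)\<^sup>2 \<le> A/2"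
        by (intro tendsto_le[OF _ qlim]) auto
      then show ?thesis unfolding a0eq by simp
    qed
    have Nne: "proximal_normal_cone ?S x \<noteq> {}"
      and e0le: "infdist d (proximal_normal_cone ?S x) \<le> \<epsilon> * norm d"
      using dN unfolding eps_proximal_normal_cone_def by auto
    define N where "N = proximal_normal_cone ?S x"
    define e0 where "e0 = infdist d N"
    show ?thesis
    proof (cases "d = 0")
      case True then show ?thesis using Apos unfolding A_def by simp
    next
      case False
      define nd where "nd = norm d"
      have ndpos: "nd > 0" unfolding nd_def using False by simp
      define \<rho> where "\<rho> e = (nd\<^sup>2 - e * nd) / (nd + e)" for e
      have e0nn: "0 \<le> e0" unfolding e0_def by (rule infdist_nonneg)
      have e0le': "e0 \<le> \<epsilon> * nd" using e0le unfolding e0_def N_def nd_def .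
      have e0nd: "e0 < nd"
      proof -
        have "\<epsilon> * nd < nd" using eps ndpos by (simp add: mult_less_cancel_right1)
        with e0le' show ?thesis by linarith
      qed
      have bound: "2 * \<kappa> * (\<rho> e)\<^sup>2 \<le> A" if e: "e0 < e" "e < nd" for e
      proof -
        have "infdist d N < e" using e unfolding e0_def by simp
        then obtain v where v: "v \<in> N" "dist d v < e"
          unfolding infdist_notempty[OF Nne[folded N_def]]
          using cINF_less_iff[OF Nne[folded N_def], of "dist d"] by auto
        have "(d - v) \<bullet> d \<le> norm (d - v) * nd" unfolding nd_def by (rule norm_cauchy_schwarz)
        also have "\<dots> \<le> e * nd" using v(2) ndpos by (intro mult_right_mono) (auto simp: dist_norm)
        finally have "(d - v) \<bullet> d \<le> e * nd" .
        moreover have "v \<bullet> d = nd\<^sup>2 - (d - v) \<bullet> d"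
          unfolding nd_def by (simp add: inner_diff_left inner_diff_right power2_norm_eq_inner inner_commute)
        ultimately have vd: "v \<bullet> d \<ge> nd\<^sup>2 - e * nd" by linarith
        have num: "nd\<^sup>2 - e * nd > 0"
        proof -
          have "e * nd < nd * nd" using e ndpos by (simp add: mult_strict_right_mono)
          then show ?thesis by (simp add: power2_eq_square)
        qed
        have vnz: "v \<noteq> 0" using vd num by auto
        have nv: "norm v \<le> nd + e"
        proof -
          have "norm v \<le> norm d + norm (v - d)" using norm_triangle_ineq[of d "v - d"] by simp
          also have "norm (v - d) < e" using v(2) by (simp add: dist_norm norm_minus_commute)
          finally show ?thesis unfolding nd_def by simp
        qed
        have nvpos: "norm v > 0" using vnz by simp
        have "\<rho> e \<le> (nd\<^sup>2 - e * nd) / norm v"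
          unfolding \<rho>_def using num nvpos nv ndpos e e0nn by (intro divide_left_mono) (auto intro!: mult_pos_pos)
        also have "\<dots> \<le> (v \<bullet> d) / norm v" using vd nvpos by (intro divide_right_mono) auto
        finally have "\<rho> e \<le> (v \<bullet> d) / norm v" .
        moreover have "\<rho> e \<ge> 0" unfolding \<rho>_def using num ndpos e e0nn by simp
        ultimately have "(\<rho> e)\<^sup>2 \<le> (max 0 ((v \<bullet> d) / norm v))\<^sup>2"
          by (intro power_mono) auto
        then have "2 * \<kappa> * (\<rho> e)\<^sup>2 \<le> 2 * \<kappa> * (max 0 ((v \<bullet> d) / norm v))\<^sup>2"
          using kpos by simp
        also have "\<dots> \<le> A" using key[of v] v(1) unfolding N_def by simp
        finally show ?thesis .
      qed
      have lim: "((\<lambda>e. 2 * \<kappa> * (\<rho> e)\<^sup>2) \<longlongrightarrow> 2 * \<kappa> * (\<rho> e0)\<^sup>2) (at_right e0)"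
        unfolding \<rho>_def using ndpos e0nn
        by (intro tendsto_intros) auto
      have "2 * \<kappa> * (\<rho> e0)\<^sup>2 \<le> A"
      proof (rule tendsto_le[OF trivial_limit_at_right_real tendsto_const lim])
        show "\<forall>\<^sub>F e in at_right e0. 2 * \<kappa> * (\<rho> e)\<^sup>2 \<le> A"
          unfolding eventually_at_right_field using e0nd bound by blast
      qed
      moreover have "nd * (1 - 2 * \<epsilon>) \<le> \<rho> e0"
      proof -
        have "\<epsilon> * e0 \<ge> 0" using eps e0nn by simp
        then have "(1 - 2 * \<epsilon>) * (nd + e0) \<le> nd - e0" using e0le' by (simp add: algebra_simps)
        then have "nd * ((1 - 2 * \<epsilon>) * (nd + e0)) \<le> nd * (nd - e0)"
          using ndpos by (intro mult_left_mono) auto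
        then have "nd * (1 - 2 * \<epsilon>) * (nd + e0) \<le> nd\<^sup>2 - e0 * nd"
          by (simp add: algebra_simps power2_eq_square)
        then show ?thesis unfolding \<rho>_def using ndpos e0nn by (simp add: pos_le_divide_eq)
      qed
      moreover have "0 \<le> nd * (1 - 2 * \<epsilon>)" using ndpos eps by simp
      ultimately have "(nd * (1 - 2 * \<epsilon>))\<^sup>2 \<le> (\<rho> e0)\<^sup>2" by (intro power_mono) auto
      then have "2 * \<kappa> * (nd * (1 - 2 * \<epsilon>))\<^sup>2 \<le> 2 * \<kappa> * (\<rho> e0)\<^sup>2" using kpos by simp
      also have "\<dots> \<le> A" by fact
      finally have "2 * \<kappa> * (nd * (1 - 2 * \<epsilon>))\<^sup>2 \<le> A" .
      moreover have "2 * \<kappa> * (1 - 2*\<epsilon>)\<^sup>2 * (norm d)\<^sup>2 = 2 * \<kappa> * (nd * (1 - 2 * \<epsilon>))\<^sup>2"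
        unfolding nd_def by (simp add: power_mult_distrib)
      ultimately show ?thesis unfolding A_def by (metis (no_types, lifting))
    qed
  qed
  show ?thesis
  proof
    show "support_fun ((\<lambda>u. Jg x *v u) ` asymptotic_second_order_tangent_cone ?Phi x d) l \<le> 0"
      unfolding support_fun_def
    proof (rule SUP_least)
      fix y assume "y \<in> (\<lambda>u. Jg x *v u) ` asymptotic_second_order_tangent_cone ?Phi x d"
      then obtain w where w: "w \<in> asymptotic_second_order_tangent_cone ?Phi x d" and y: "y = Jg x *v w" by blast
      show "ereal (l \<bullet> y) \<le> 0" using part1[OF w] unfolding y lJ by simp
    qed
  next
    define P where "P = d \<bullet> (Hf x *v d) + (\<Sum>i\<in>UNIV. l $ i * (d \<bullet> (Hg x $ i *v d)))"
    define c where "c = 2 * \<kappa> * (1 - 2 * \<epsilon>)\<^sup>2 * (norm d)\<^sup>2"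
    define SS where "SS = support_fun ((\<lambda>u. Jg x *v u + (\<chi> i. d \<bullet> (Hg x $ i *v d)))
                            ` second_order_tangent_set ?Phi x d) l"
    have SSle: "SS \<le> ereal (P - c)"
      unfolding SS_def support_fun_def
    proof (rule SUP_least)
      fix y assume "y \<in> (\<lambda>u. Jg x *v u + (\<chi> i. d \<bullet> (Hg x $ i *v d))) ` second_order_tangent_set ?Phi x d"
      then obtain w where w: "w \<in> second_order_tangent_set ?Phi x d"
        and y: "y = Jg x *v w + (\<chi> i. d \<bullet> (Hg x $ i *v d))" by blast
      have "l \<bullet> y = - (gf x \<bullet> w) + (\<Sum>i\<in>UNIV. l $ i * (d \<bullet> (Hg x $ i *v d)))"
      proof -
        have "l \<bullet> (\<chi> i. d \<bullet> (Hg x $ i *v d)) = (\<Sum>i\<in>UNIV. l $ i * (d \<bullet> (Hg x $ i *v d)))"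
          by (simp add: inner_vec_def)
        then show ?thesis unfolding y inner_add_right lJ by simp
      qed
      then show "ereal (l \<bullet> y) \<le> ereal (P - c)"
        using part2[OF w] unfolding P_def c_def by simp
    qed
    show "ereal P - SS \<ge> ereal c"
    proof (cases SS)
      case (real r)
      then show ?thesis using SSle by simp
    next
      case PInf
      then show ?thesis using SSle by simp
    next
      case MInf
      then show ?thesis by simp
    qed
  qed
qed

end
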